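(* Consider the closed-loop system described in the context, in which at each time $k$ the input $u_k=c^\star_{0|k}$ is obtained by solving the MPC problem $(\mathrm{MPC}_k)$ with $\bar x_{0|k}=\hat x_k$ (the Kalman filter estimate) and the tightened sets $\bar{\mathcal{X}}_{\mathrm{RF},i}$, $\bar{\mathcal{U}}_{\mathrm{RF},i}$, $\bar{\mathcal{X}}_{f,\mathrm{RF}}$. For any $k\ge 0$, if $(\mathrm{MPC}_k)$ is feasible, then, with probability (conditional on $y_{0:k}$) no smaller than $1-p_f$, $(\mathrm{MPC}_{k+1})$ is feasible. More precisely, $(\mathrm{MPC}_{k+1})$ is feasible whenever the realized disturbance $n_k$ in $\hat x_{k+1}=A\hat x_k+Bu_k+n_k$ lies in $\mathcal{E}^n_{1-p_f}$.
   Context: System: $x_{k+1}=Ax_k+Bu_k+w_k$, $y_k=Cx_k+v_k$, with $w_k\sim\mathcal{N}(0,Q)$, $v_k\sim\mathcal{N}(0,R)$ i.i.d. and mutually independent, $x_0\sim\mathcal{N}(\mu_0,\Sigma_0)$; $(A,B)$ controllable, $(A,C)$ observable. Kalman filter: $\hat x^-_{k+1}=A\hat x_k+Bu_k$, $\hat x_{k+1}=\hat x^-_{k+1}+L_{k+1}(y_{k+1}-C\hat x^-_{k+1})$, $\hat x_0^-=\mu_0$, $P_0^-=\Sigma_0$, $P^-_{k+1}=AP_kA^\top+Q$, $P_{k+1}=(I-L_{k+1}C)P^-_{k+1}$, $L_{k+1}=P^-_{k+1}C^\top(CP^-_{k+1}C^\top+R)^{-1}$. Then $\hat x_{k+1}=A\hat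 x_k+Bu_k+n_k$ with $n_k=L_{k+1}CAe_k+L_{k+1}Cw_k+L_{k+1}v_{k+1}$, $e_k=x_k-\hat x_k$, and conditionally on $y_{0:k}$, $n_k\sim\mathcal{N}(0,\Phi_k)$, $\Phi_k=L_{k+1}(C(AP_kA^\top+Q)C^\top+R)L_{k+1}^\top$; also $e_k\mid y_{0:k}\sim\mathcal{N}(0,P_k)$. Constraints: $\mathcal{X}\subseteq\mathbb{R}^{n_x}$ a convex polyhedron, $\mathcal{U}$ a polytope, probabilities $p_x,p_f\in(0,1)$. $\mathcal{E}^e_{1-p_x}$ and $\mathcal{E}^n_{1-p_f}$ are compact polytopes containing the origin in their interior with $\mathbb{P}(e_k\in\mathcal{E}^e_{1-p_x}\mid y_{0:k})\ge 1-p_x$ and $\mathbb{P}(n_k\in\mathcal{E}^n_{1-p_f}\mid y_{0:k})\ge 1-p_f$ for all $k$. $K$ is a gain with $A_{\mathrm{cl}}:=A+BK$ Schur. $\oplus$ is Minkowski sum, $\mathcal{X}\ominus\mathcal{Y}=\{x: x+y\in\mathcal{X}\ \forall y\in\mathcal{Y}\}$ is the Pontryagin difference, $\bigoplus_{q=0}^{-1}(\cdot)=\{0\}$. Tightened sets: $\hat{\mathcal{X}}=\mathcal{X}\ominus\mathcal{E}^e_{1-p_x}$; $\bar{\mathcal{X}}_{\mathrm{RF},i}=\hat{\mathcal{X}}\ominus\bigoplus_{q=0}^{i-1}A_{\mathrm{cl}}^q\mathcal{E}^n_{1-p_f}$ and $\bar{\mathcal{U}}_{\mathrm{RF},i}=\mathcal{U}\ominus\bigoplus_{q=0}^{i-1}KA_{\mathrm{cl}}^q\mathcal{E}^n_{1-p_f}$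 for $i=0,\dots,N-1$; $\hat{\mathcal{X}}_f\subseteq\hat{\mathcal{X}}$ is a robust positive invariant set for $x^+=A_{\mathrm{cl}}x+n$, $n\in\mathcal{E}^n_{1-p_f}$ (i.e. $x\in\hat{\mathcal{X}}_f\Rightarrow A_{\mathrm{cl}}x+n\in\hat{\mathcal{X}}_f$ for all $n\in\mathcal{E}^n_{1-p_f}$) with $Kx\in\mathcal{U}$ for all $x\in\hat{\mathcal{X}}_f$; $\bar{\mathcal{X}}_{f,\mathrm{RF}}=\hat{\mathcal{X}}_f\ominus\bigoplus_{q=0}^{N-1}A_{\mathrm{cl}}^q\mathcal{E}^n_{1-p_f}$. MPC problem $(\mathrm{MPC}_k)$ with horizon $N\ge1$: minimize $\sum_{i=0}^{N-1}\ell(\bar x_{i|k},c_{i|k})+O(\bar x_{N|k})$ over $c_{0|k},\dots,c_{N-1|k}$ subject to $\bar x_{i+1|k}=A\bar x_{i|k}+Bc_{i|k}$, $\bar x_{0|k}=\hat x_k$, $\bar x_{i|k}\in\bar{\mathcal{X}}_{\mathrm{RF},i}$, $c_{i|k}\in\bar{\mathcal{U}}_{\mathrm{RF},i}$ for $i=0,\dots,N-1$, and $\bar x_{N|k}\in\bar{\mathcal{X}}_{f,\mathrm{RF}}$; $\ell$ and $O$ are given cost functions. "Feasible" means the constraint set is nonempty; the applied input is $u_k=c^\star_{0|k}$ from an optimal solution. *)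

theory Defs
  imports "HOL-Analysis.Analysis" "HOL-Probability.Probability"
begin

(* matrix power *)
fun mpow :: "('a::semiring_1)^'n^'n \<Rightarrow> nat \<Rightarrow> 'a^'n^'n" where
  "mpow A 0 = mat 1"
| "mpow A (Suc k) = A ** mpow A k"

(* Minkowski sum and Pontryagin difference *)
definition msum :: "'a::ab_group_add set \<Rightarrow> 'a set \<Rightarrow> 'a set" where
  "msum X Y = {x + y | x y. x \<in> X \<and> y \<in> Y}"

definition pdiff :: "'a::ab_group_add set \<Rightarrow> 'a set \<Rightarrow> 'a set" where
  "pdiff X Y = {x. \<forall>y\<in>Y. x + y \<in> X}"

(* iterated Minkowski sum  (+)_{q=0}^{i-1} F q, equal to {0} for i = 0 *)
fun bigmsum :: "(nat \<Rightarrow> 'a::ab_group_add set) \<Rightarrow> nat \<Rightarrow> 'a set" where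
  "bigmsum F 0 = {0}"
| "bigmsum F (Suc i) = msum (bigmsum F i) (F i)"

(* Schur stability: all (complex) eigenvalues have modulus < 1 *)
definition schur :: "real^'n^'n \<Rightarrow> bool" where
  "schur A \<longleftrightarrow> (\<forall>(v::complex^'n) (lam::complex).
      v \<noteq> 0 \<and> (\<chi> i j. complex_of_real (A$i$j)) *v v = lam *s v \<longrightarrow> cmod lam < 1)"

(* controllability of (A,B): rank [B, AB, ..., A^(n-1) B] = n *)
definition controllable :: "real^'n^'n \<Rightarrow> real^'m^'n \<Rightarrow> bool" where
  "controllable A B \<longleftrightarrow>
     span {mpow A i *v (B *v u) | i u. i < CARD('n)} = UNIV"

(* observability of (A,C): rank [C; CA; ...; CA^(n-1)] = n *)
definition observable :: "real^'n^'n \<Rightarrow> real^'n^'p \<Rightarrow> bool" where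
  "observable A C \<longleftrightarrow>
     (\<forall>x. (\<forall>i < CARD('n). C *v (mpow A i *v x) = 0) \<longrightarrow> x = 0)"

(* nominal prediction  xbar_{i+1} = A xbar_i + B c_i, xbar_0 = x0 *)
fun traj :: "real^'n^'n \<Rightarrow> real^'m^'n \<Rightarrow> real^'n \<Rightarrow> (nat \<Rightarrow> real^'m) \<Rightarrow> nat \<Rightarrow> real^'n" where
  "traj A B x0 c 0 = x0"
| "traj A B x0 c (Suc i) = A *v traj A B x0 c i + B *v c i"

(* tightened sets *)
definition Xhat :: "(real^'n) set \<Rightarrow> (real^'n) set \<Rightarrow> (real^'n) set" where
  "Xhat X Ee = pdiff X Ee"

definition XRF :: "real^'n^'n \<Rightarrow> (real^'n) set \<Rightarrow> (real^'n) set \<Rightarrow> nat \<Rightarrow> (real^'n) set" where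
  "XRF Acl Xh En i = pdiff Xh (bigmsum (\<lambda>q. (\<lambda>e. mpow Acl q *v e) ` En) i)"

definition URF :: "real^'n^'n \<Rightarrow> real^'n^'m \<Rightarrow> (real^'m) set \<Rightarrow> (real^'n) set \<Rightarrow> nat \<Rightarrow> (real^'m) set" where
  "URF Acl K U En i = pdiff U (bigmsum (\<lambda>q. (\<lambda>e. K *v (mpow Acl q *v e)) ` En) i)"

definition XfRF :: "real^'n^'n \<Rightarrow> (real^'n) set \<Rightarrow> (real^'n) set \<Rightarrow> nat \<Rightarrow> (real^'n) set" where
  "XfRF Acl Xf En N = pdiff Xf (bigmsum (\<lambda>q. (\<lambda>e. mpow Acl q *v e) ` En) N)"

(* the constraint set of (MPC) at initial state x0 is satisfied by the input sequence c *)
definition mpc_admissible ::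
  "real^'n^'n \<Rightarrow> real^'m^'n \<Rightarrow> real^'n^'m \<Rightarrow> nat \<Rightarrow> (real^'n) set \<Rightarrow> (real^'m) set
   \<Rightarrow> (real^'n) set \<Rightarrow> (real^'n) set \<Rightarrow> real^'n \<Rightarrow> (nat \<Rightarrow> real^'m) \<Rightarrow> bool" where
  "mpc_admissible A B K N Xh U En Xf x0 c \<longleftrightarrow>
     (\<forall>i<N. traj A B x0 c i \<in> XRF (A + B ** K) Xh En i
            \<and> c i \<in> URF (A + B ** K) K U En i)
     \<and> traj A B x0 c N \<in> XfRF (A + B ** K) Xf En N"

(* (MPC) is feasible at x0: its constraint set is nonempty *)
definition mpc_feasible ::
  "real^'n^'n \<Rightarrow> real^'m^'n \<Rightarrow> real^'n^'m \<Rightarrow> nat \<Rightarrow> (real^'n) set \<Rightarrow> (real^'m) set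
   \<Rightarrow> (real^'n) set \<Rightarrow> (real^'n) set \<Rightarrow> real^'n \<Rightarrow> bool" where
  "mpc_feasible A B K N Xh U En Xf x0 \<longleftrightarrow> (\<exists>c. mpc_admissible A B K N Xh U En Xf x0 c)"

definition mpc_cost ::
  "real^'n^'n \<Rightarrow> real^'m^'n \<Rightarrow> nat \<Rightarrow> (real^'n \<Rightarrow> real^'m \<Rightarrow> real) \<Rightarrow> (real^'n \<Rightarrow> real)
   \<Rightarrow> real^'n \<Rightarrow> (nat \<Rightarrow> real^'m) \<Rightarrow> real" where
  "mpc_cost A B N ell Vf x0 c = (\<Sum>i<N. ell (traj A B x0 c i) (c i)) + Vf (traj A B x0 c N)"

(* c is an optimal solution of (MPC) at x0 *)
definition mpc_optimal ::
  "real^'n^'n \<Rightarrow> real^'m^'n \<Rightarrow> real^'n^'m \<Rightarrow> nat \<Rightarrow> (real^'n) set \<Rightarrow> (real^'m) set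
   \<Rightarrow> (real^'n) set \<Rightarrow> (real^'n) set \<Rightarrow> (real^'n \<Rightarrow> real^'m \<Rightarrow> real) \<Rightarrow> (real^'n \<Rightarrow> real)
   \<Rightarrow> real^'n \<Rightarrow> (nat \<Rightarrow> real^'m) \<Rightarrow> bool" where
  "mpc_optimal A B K N Xh U En Xf ell Vf x0 c \<longleftrightarrow>
     mpc_admissible A B K N Xh U En Xf x0 c \<and>
     (\<forall>c'. mpc_admissible A B K N Xh U En Xf x0 c' \<longrightarrow>
            mpc_cost A B N ell Vf x0 c \<le> mpc_cost A B N ell Vf x0 c')"

end

theory Submission
  imports Defs
begin


lemma bigmsum_char:
  "y \<in> bigmsum (\<lambda>q. (\<lambda>e. h q e) ` E) i \<longleftrightarrow>
     (\<exists>e. (\<forall>q<i. e q \<in> E) \<and> y = (\<Sum>q<i. h q (e q)))"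
proof (induction i arbitrary: y)
  case 0
  then show ?case by simp
next
  case (Suc i)
  show ?case
  proof
    assume "y \<in> bigmsum (\<lambda>q. (\<lambda>e. h q e) ` E) (Suc i)"
    then obtain a b where ab: "y = a + h i b" "a \<in> bigmsum (\<lambda>q. (\<lambda>e. h q e) ` E) i" "b \<in> E"
      by (auto simp: msum_def)
    then obtain e where e: "\<forall>q<i. e q \<in> E" "a = (\<Sum>q<i. h q (e q))" using Suc.IH by blast
    have "(\<Sum>q<i. h q ((e(i:=b)) q)) = (\<Sum>q<i. h q (e q))" by (rule sum.cong) auto
    then show "\<exists>e. (\<forall>q<Suc i. e q \<in> E) \<and> y = (\<Sum>q<Suc i. h q (e q))"
      using e ab by (intro exI[of _ "e(i:=b)"]) (auto simp: less_Suc_eq)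
  next
    assume "\<exists>e. (\<forall>q<Suc i. e q \<in> E) \<and> y = (\<Sum>q<Suc i. h q (e q))"
    then obtain e where e: "\<forall>q<Suc i. e q \<in> E" "y = (\<Sum>q<Suc i. h q (e q))" by blast
    have "(\<Sum>q<i. h q (e q)) \<in> bigmsum (\<lambda>q. (\<lambda>e. h q e) ` E) i" unfolding Suc.IH using e(1) by (intro exI[of _ e] conjI) auto
    then show "y \<in> bigmsum (\<lambda>q. (\<lambda>e. h q e) ` E) (Suc i)"
      using e by (auto simp: msum_def)
  qed
qed

lemma pdiff_big:
  "x \<in> pdiff X (bigmsum (\<lambda>q. (\<lambda>e. h q e) ` E) i) \<longleftrightarrow>
     (\<forall>e. (\<forall>q<i. e q \<in> E) \<longrightarrow> x + (\<Sum>q<i. h q (e q)) \<in> X)"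
  unfolding pdiff_def using bigmsum_char[of _ h E i] by auto

lemma mv_sum:
  fixes i :: nat
  shows "(K::real^'a^'b) *v (\<Sum>q<i. f q) = (\<Sum>q<i. K *v f q)"
  by (induction i) (simp_all add: matrix_vector_right_distrib)

lemma traj_cong:
  fixes i :: nat
  shows "(\<forall>j<i. c j = d j) \<Longrightarrow> traj A B x c i = traj A B x d i"
  by (induction i) auto

lemma sum_upd:
  fixes i :: nat
  shows "(\<Sum>q<Suc i. h q ((e(i:=v)) q)) = (\<Sum>q<i. h q (e q)) + (h i v :: 'a::comm_monoid_add)"
proof -
  have "(\<Sum>q<i. h q ((e(i:=v)) q)) = (\<Sum>q<i. h q (e q))" by (rule sum.cong) auto
  then show ?thesis by simp
qed

lemma mpow_Suc_v: "mpow M (Suc q) *v v = M *v (mpow M q *v v)"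
  by (simp add: matrix_vector_mul_assoc[symmetric])

theorem theorem1:
  fixes A :: "real^'n^'n" and B :: "real^'m^'n" and C :: "real^'n^'p"
    and K :: "real^'n^'m"
    and X Ee En Xf :: "(real^'n) set" and U :: "(real^'m) set"
    and px pf :: real and N :: nat
    and ell :: "real^'n \<Rightarrow> real^'m \<Rightarrow> real" and Vf :: "real^'n \<Rightarrow> real"
    and xhat :: "real^'n" and c :: "nat \<Rightarrow> real^'m"
    and M :: "'w measure" and n :: "'w \<Rightarrow> real^'n"
  assumes ctrb: "controllable A B" and obsv: "observable A C"
    and X_poly: "polyhedron X" and U_poly: "polytope U"
    and px: "0 < px" "px < 1" and pf: "0 < pf" "pf < 1"
    and Ee: "polytope Ee" "compact Ee" "0 \<in> interior Ee"
    and En: "polytope En" "compact En" "0 \<in> interior En"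
    and schur: "schur (A + B ** K)"
    and Xf_sub: "Xf \<subseteq> Xhat X Ee"
    and Xf_rpi: "\<And>x v. x \<in> Xf \<Longrightarrow> v \<in> En \<Longrightarrow> (A + B ** K) *v x + v \<in> Xf"
    and Xf_U: "\<And>x. x \<in> Xf \<Longrightarrow> K *v x \<in> U"
    and N: "N \<ge> 1"
    and opt: "mpc_optimal A B K N (Xhat X Ee) U En Xf ell Vf xhat c"
    and M: "prob_space M" and n_meas: "n \<in> borel_measurable M"
    and n_prob: "measure M {\<omega> \<in> space M. n \<omega> \<in> En} \<ge> 1 - pf"
  shows "(\<forall>v \<in> En. mpc_feasible A B K N (Xhat X Ee) U En Xf (A *v xhat + B *v c 0 + v))
     \<and> (\<exists>S \<in> sets M. S \<subseteq> {\<omega> \<in> space M.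
            mpc_feasible A B K N (Xhat X Ee) U En Xf (A *v xhat + B *v c 0 + n \<omega>)}
          \<and> measure M S \<ge> 1 - pf)"
proof -
  define Acl where "Acl = A + B ** K"
  define P where "P q v = mpow Acl q *v v" for q v
  define Xh where "Xh = Xhat X Ee"
  have adm: "mpc_admissible A B K N Xh U En Xf xhat c" using opt by (simp add: mpc_optimal_def Xh_def)
  have trX: "\<And>i e. i < N \<Longrightarrow> (\<forall>q<i. e q \<in> En) \<Longrightarrow> traj A B xhat c i + (\<Sum>q<i. P q (e q)) \<in> Xh"
    using adm unfolding mpc_admissible_def XRF_def P_def Acl_def pdiff_big by blast
  have trU: "\<And>i e. i < N \<Longrightarrow> (\<forall>q<i. e q \<in> En) \<Longrightarrow> c i + (\<Sum>q<i. K *v P q (e q)) \<in> U"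
    using adm unfolding mpc_admissible_def URF_def P_def Acl_def pdiff_big by blast
  have trF: "\<And>e. (\<forall>q<N. e q \<in> En) \<Longrightarrow> traj A B xhat c N + (\<Sum>q<N. P q (e q)) \<in> Xf"
    using adm unfolding mpc_admissible_def XfRF_def P_def Acl_def pdiff_big by blast
  have PS: "P (Suc q) v = Acl *v P q v" for q v unfolding P_def by (rule mpow_Suc_v)
  have P0: "P 0 v = v" for v by (simp add: P_def)
  have feas: "mpc_feasible A B K N Xh U En Xf (A *v xhat + B *v c 0 + v)" if v: "v \<in> En" for v
  proof -
    define x' where "x' = A *v xhat + B *v c 0 + v"
    define c0 where "c0 i = c (Suc i) + K *v P i v" for i
    have t0: "traj A B x' c0 i = traj A B xhat c (Suc i) + P i v" for i
    proof (induction i)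
      case 0 then show ?case by (simp add: x'_def P0)
    next
      case (Suc i)
      have "traj A B x' c0 (Suc i) = A *v traj A B x' c0 i + B *v c0 i" by simp
      also have "\<dots> = A *v (traj A B xhat c (Suc i) + P i v) + B *v (c (Suc i) + K *v P i v)"
        by (simp add: Suc c0_def)
      also have "\<dots> = (A *v traj A B xhat c (Suc i) + B *v c (Suc i)) + (A *v P i v + (B ** K) *v P i v)"
        by (simp only: matrix_vector_right_distrib matrix_vector_mul_assoc add_ac)
      also have "\<dots> = traj A B xhat c (Suc (Suc i)) + P (Suc i) v"
        by (simp only: PS Acl_def matrix_vector_mult_add_rdistrib traj.simps)
      finally show ?case .
    qed
    define t where "t = traj A B x' c0 (N - 1)"
    define c' where "c' = c0(N - 1 := K *v t)"
    have tr': "traj A B x' c' i = traj A B x' c0 i" if "i \<le> N - 1" for i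
      using that by (intro traj_cong) (auto simp: c'_def)
    have tN1: "t = traj A B xhat c N + P (N - 1) v" using t0[of "N-1"] N by (simp add: t_def)
    have tXf: "t + (\<Sum>q<N-1. P q (e q)) \<in> Xf" if e: "\<forall>q<N-1. e q \<in> En" for e
    proof -
      have "traj A B xhat c N + (\<Sum>q<N. P q ((e(N-1:=v)) q)) \<in> Xf"
        using e v N by (intro trF) auto
      moreover have "(\<Sum>q<N. P q ((e(N-1:=v)) q)) = (\<Sum>q<N-1. P q (e q)) + P (N-1) v"
      proof -
        have "N = Suc (N - 1)" using N by simp
        then have "(\<Sum>q<N. P q ((e(N-1:=v)) q)) = (\<Sum>q<Suc (N-1). P q ((e(N-1:=v)) q))" by simp
        also have "\<dots> = (\<Sum>q<N-1. P q (e q)) + P (N-1) v"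
          using sum_upd[where h=P and i="N-1" and e=e and v=v] by simp
        finally show ?thesis .
      qed
      ultimately show ?thesis using tN1 by (simp add: add_ac)
    qed
    have "mpc_admissible A B K N Xh U En Xf x' c'"
      unfolding mpc_admissible_def XRF_def URF_def XfRF_def pdiff_big Acl_def[symmetric]
        P_def[symmetric]
    proof (intro conjI allI impI)
      fix i e assume i: "i < N" and e: "\<forall>q<i. e q \<in> En"
      show "traj A B x' c' i + (\<Sum>q<i. P q (e q)) \<in> Xh"
      proof (cases "i < N - 1")
        case True
        have "traj A B xhat c (Suc i) + (\<Sum>q<Suc i. P q ((e(i:=v)) q)) \<in> Xh"
          using True e v by (intro trX) (auto simp: less_Suc_eq)
        moreover have "(\<Sum>q<Suc i. P q ((e(i:=v)) q)) = (\<Sum>q<i. P q (e q)) + P i v"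
          by (rule sum_upd)
        ultimately show ?thesis using tr'[of i] t0[of i] True by (simp add: add_ac)
      next
        case False
        then have iN: "i = N - 1" using i by simp
        have "t + (\<Sum>q<i. P q (e q)) \<in> Xf" using tXf e iN by simp
        then show ?thesis using Xf_sub tr'[of i] iN by (auto simp: Xh_def t_def)
      qed
      show "c' i + (\<Sum>q<i. K *v P q (e q)) \<in> U"
      proof (cases "i < N - 1")
        case True
        have "c (Suc i) + (\<Sum>q<Suc i. K *v P q ((e(i:=v)) q)) \<in> U"
          using True e v by (intro trU) (auto simp: less_Suc_eq)
        moreover have "(\<Sum>q<Suc i. K *v P q ((e(i:=v)) q)) = (\<Sum>q<i. K *v P q (e q)) + K *v P i v"
          by (rule sum_upd)
        ultimately show ?thesis using True by (simp add: c'_def c0_def add_ac)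
      next
        case False
        then have iN: "i = N - 1" using i by simp
        have "t + (\<Sum>q<i. P q (e q)) \<in> Xf" using tXf e iN by simp
        then have "K *v (t + (\<Sum>q<i. P q (e q))) \<in> U" by (rule Xf_U)
        then show ?thesis using iN by (simp add: c'_def mv_sum matrix_vector_right_distrib)
      qed
    next
      fix e assume e: "\<forall>q<N. e q \<in> En"
      have trN: "traj A B x' c' N = Acl *v t"
      proof -
        have "N = Suc (N - 1)" using N by simp
        then have "traj A B x' c' N = A *v traj A B x' c' (N-1) + B *v c' (N-1)"
          by (metis traj.simps(2))
        also have "\<dots> = A *v t + B *v (K *v t)" using tr'[of "N-1"] by (simp add: c'_def t_def)
        also have "\<dots> = Acl *v t"
          by (simp add: Acl_def matrix_vector_mult_add_rdistrib matrix_vector_mul_assoc)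
        finally show ?thesis .
      qed
      have "N = Suc (N - 1)" using N by simp
      then have "(\<Sum>q<N. P q (e q)) = (\<Sum>q<Suc (N-1). P q (e q))" by simp
      also have "\<dots> = P 0 (e 0) + (\<Sum>q<N-1. P (Suc q) (e (Suc q)))"
        by (rule sum.lessThan_Suc_shift)
      also have "\<dots> = e 0 + Acl *v (\<Sum>q<N-1. P q (e (Suc q)))"
        by (simp add: P0 PS mv_sum)
      finally have sN: "(\<Sum>q<N. P q (e q)) = e 0 + Acl *v (\<Sum>q<N-1. P q (e (Suc q)))" .
      have "t + (\<Sum>q<N-1. P q (e (Suc q))) \<in> Xf" using e by (intro tXf) auto
      moreover have "e 0 \<in> En" using e N by auto
      ultimately have "Acl *v (t + (\<Sum>q<N-1. P q (e (Suc q)))) + e 0 \<in> Xf"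
        using Xf_rpi unfolding Acl_def by blast
      then show "traj A B x' c' N + (\<Sum>q<N. P q (e q)) \<in> Xf"
        using trN sN by (simp add: matrix_vector_right_distrib add_ac)
    qed
    then show ?thesis by (auto simp: mpc_feasible_def x'_def)
  qed
  have part1: "\<forall>v \<in> En. mpc_feasible A B K N (Xhat X Ee) U En Xf (A *v xhat + B *v c 0 + v)"
    using feas by (simp add: Xh_def)
  define S where "S = {\<omega> \<in> space M. n \<omega> \<in> En}"
  have "closed En" using En(2) by (rule compact_imp_closed)
  then have "En \<in> sets borel" by (rule borel_closed)
  from measurable_sets[OF n_meas this] have Sm: "S \<in> sets M" unfolding S_def
    by (simp add: vimage_def Int_def conj_commute)
  show ?thesis using part1 Sm n_prob by (intro conjI bexI[of _ S]) (auto simp: S_def)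
qed

end
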